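(* Let $n\ge2$ and let $\mathcal{S}$ be a set of two-factor interactions among factors $F_1,\dots,F_n$. Suppose at least one of the following holds: (i) every factor appears in at most three interactions of $\mathcal{S}$, and there is no set of four factors for which $\mathcal{S}$ contains all six pairwise interactions; (ii) there are at most three factors each of which appears in more than two interactions of $\mathcal{S}$; (iii) either there is no sequence of distinct factors $G_1,\dots,G_m$ ($m\ge3$) with $G_1G_2,G_2G_3,\dots,G_{m-1}G_m,G_mG_1\in\mathcal{S}$, or there is at least one factor common to all such sequences. Then there exists a blocked $2^n$ factorial in blocks of size four from which all main effects and all interactions in $\mathcal{S}$ are estimable.
   Context: A blocked $2^n$ factorial in blocks of size four is specified by a $2\times n$ generator matrix $X$ over $\mathrm{GF}(2)$ of rank $2$: the principal block is the row space of $X$ and the other blocks are its cosets in $\mathrm{GF}(2)^n$. An effect of a set $S$ of factors, with contrast $(-1)^{\sum_{j\in S}x_j}$, is estimable iff its contrast sums to zero over every block. *)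

theory Defs
  imports Main "HOL-Library.Z2"
begin

text \<open>Vectors of GF(2)^n are modelled as functions nat => bit vanishing outside {0..<n};
  factors F_1..F_n are the indices 0..<n.\<close>

definition gfvec :: "nat \<Rightarrow> (nat \<Rightarrow> bit) set" where
  "gfvec n = {x. \<forall>i\<ge>n. x i = 0}"

text \<open>A 2 x n generator matrix, given by its two rows r1 r2, has rank 2 iff the rows are
  linearly independent over GF(2).\<close>
definition rank2 :: "nat \<Rightarrow> (nat \<Rightarrow> bit) \<Rightarrow> (nat \<Rightarrow> bit) \<Rightarrow> bool" where
  "rank2 n r1 r2 \<longleftrightarrow> r1 \<in> gfvec n \<and> r2 \<in> gfvec n \<and>
     (\<forall>a b :: bit. (\<lambda>i. a * r1 i + b * r2 i) = (\<lambda>_. 0) \<longrightarrow> a = 0 \<and> b = 0)"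

definition principal_block :: "(nat \<Rightarrow> bit) \<Rightarrow> (nat \<Rightarrow> bit) \<Rightarrow> (nat \<Rightarrow> bit) set" where
  "principal_block r1 r2 = {(\<lambda>i. a * r1 i + b * r2 i) | a b :: bit. True}"

definition block :: "(nat \<Rightarrow> bit) \<Rightarrow> (nat \<Rightarrow> bit) \<Rightarrow> (nat \<Rightarrow> bit) \<Rightarrow> (nat \<Rightarrow> bit) set" where
  "block r1 r2 x = (\<lambda>v. (\<lambda>i. x i + v i)) ` principal_block r1 r2"

definition contrast :: "nat set \<Rightarrow> (nat \<Rightarrow> bit) \<Rightarrow> int" where
  "contrast S x = (if (\<Sum>j\<in>S. x j) = 0 then 1 else -1)"

definition estimable :: "nat \<Rightarrow> (nat \<Rightarrow> bit) \<Rightarrow> (nat \<Rightarrow> bit) \<Rightarrow> nat set \<Rightarrow> bool" where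
  "estimable n r1 r2 S \<longleftrightarrow> (\<forall>x\<in>gfvec n. (\<Sum>y\<in>block r1 r2 x. contrast S y) = 0)"

definition ideg :: "nat set set \<Rightarrow> nat \<Rightarrow> nat" where
  "ideg I f = card {e\<in>I. f \<in> e}"

definition icycle :: "nat \<Rightarrow> nat set set \<Rightarrow> nat list \<Rightarrow> bool" where
  "icycle n I G \<longleftrightarrow> distinct G \<and> length G \<ge> 3 \<and> set G \<subseteq> {0..<n} \<and>
     (\<forall>i<length G. {G ! i, G ! ((i + 1) mod length G)} \<in> I)"

end

theory Submission
  imports Defs
begin

lemma bit_add_self[simp]: "(y::bit) + y = 0"
  by (cases y) simp_all

lemma UNIV_bit: "(UNIV::bit set) = {0,1}"
  by (auto intro: bit.exhaust)

lemma estimable_if: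
  assumes rk: "rank2 n r1 r2"
    and ne: "(\<Sum>j\<in>S. r1 j) \<noteq> 0 \<or> (\<Sum>j\<in>S. r2 j) \<noteq> 0"
  shows "estimable n r1 r2 S"
  unfolding estimable_def
proof
  fix x :: "nat \<Rightarrow> bit"
  define g where "g = (\<lambda>p::bit\<times>bit. \<lambda>i. x i + (fst p * r1 i + snd p * r2 i))"
  have pb: "principal_block r1 r2 = (\<lambda>p::bit\<times>bit. \<lambda>i. fst p * r1 i + snd p * r2 i) ` UNIV"
  proof (rule set_eqI)
    fix v show "v \<in> principal_block r1 r2 \<longleftrightarrow> v \<in> (\<lambda>p::bit\<times>bit. \<lambda>i. fst p * r1 i + snd p * r2 i) ` UNIV"
      unfolding principal_block_def
    proof
      assume "v \<in> {\<lambda>i. a * r1 i + b * r2 i |a b. True}"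
      then obtain a b where "v = (\<lambda>i. a * r1 i + b * r2 i)" by blast
      then show "v \<in> (\<lambda>p::bit\<times>bit. \<lambda>i. fst p * r1 i + snd p * r2 i) ` UNIV"
        by (intro image_eqI[of _ _ "(a,b)"]) simp_all
    qed blast
  qed
  have bl: "block r1 r2 x = g ` UNIV"
    unfolding block_def pb g_def image_image by simp
  have inj: "inj g"
  proof (rule injI)
    fix p q assume "g p = g q"
    then have e: "\<And>i. fst p * r1 i + snd p * r2 i = fst q * r1 i + snd q * r2 i"
      unfolding g_def by (metis add_left_cancel)
    have "(\<lambda>i. (fst p + fst q) * r1 i + (snd p + snd q) * r2 i) = (\<lambda>_. 0)"
    proof
      fix i
      have "(fst p + fst q) * r1 i + (snd p + snd q) * r2 i
          = (fst p * r1 i + snd p * r2 i) + (fst q * r1 i + snd q * r2 i)"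
        by (simp only: distrib_right add.assoc add.left_commute)
      also have "\<dots> = 0" using e[of i] by (metis bit_add_self)
      finally show "(fst p + fst q) * r1 i + (snd p + snd q) * r2 i = 0" .
    qed
    with rk have "fst p + fst q = 0" "snd p + snd q = 0" unfolding rank2_def by blast+
    then have "fst p = fst q" "snd p = snd q"
      by (metis add_left_cancel bit_add_self)+
    then show "p = q" by (simp add: prod_eq_iff)
  qed
  define sx where "sx = (\<Sum>j\<in>S. x j)"
  define s1 where "s1 = (\<Sum>j\<in>S. r1 j)"
  define s2 where "s2 = (\<Sum>j\<in>S. r2 j)"
  have c: "contrast S (g p) = (if sx + (fst p * s1 + snd p * s2) = 0 then 1 else -1)" for p
  proof -
    have "(\<Sum>j\<in>S. x j + (fst p * r1 j + snd p * r2 j)) = sx + (fst p * s1 + snd p * s2)"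
      unfolding sx_def s1_def s2_def by (simp only: sum.distrib sum_distrib_left)
    then show ?thesis unfolding contrast_def g_def by (simp only:)
  qed
  have U: "(UNIV::(bit\<times>bit) set) = {(0,0),(0,1),(1,0),(1,1)}"
    by (auto simp: UNIV_bit simp flip: UNIV_Times_UNIV)
  have "(\<Sum>y\<in>block r1 r2 x. contrast S y) = (\<Sum>p\<in>UNIV. contrast S (g p))"
    unfolding bl by (simp add: sum.reindex[OF inj])
  also have "\<dots> = 0"
    using ne unfolding U c s1_def[symmetric] s2_def[symmetric]
    by (cases sx; cases s1; cases s2) simp_all
  finally show "(\<Sum>y\<in>block r1 r2 x. contrast S y) = 0" .
qed

definition nb :: "nat set set \<Rightarrow> nat set \<Rightarrow> nat \<Rightarrow> nat set" where
  "nb I T x = {y\<in>T. y \<noteq> x \<and> {x,y} \<in> I}"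

definition proper :: "nat set set \<Rightarrow> nat set \<Rightarrow> (nat \<Rightarrow> nat) \<Rightarrow> bool" where
  "proper I T col \<longleftrightarrow> (\<forall>x\<in>T. col x < 3) \<and> (\<forall>x\<in>T. \<forall>y\<in>T. x \<noteq> y \<longrightarrow> {x,y} \<in> I \<longrightarrow> col x \<noteq> col y)"

definition colorable :: "nat set set \<Rightarrow> nat set \<Rightarrow> bool" where
  "colorable I T \<longleftrightarrow> (\<exists>col. proper I T col)"

lemma proper_mono: "proper I T col \<Longrightarrow> T' \<subseteq> T \<Longrightarrow> proper I T' col"
  unfolding proper_def by blast

lemma colorable_mono: "colorable I T \<Longrightarrow> T' \<subseteq> T \<Longrightarrow> colorable I T'"
  unfolding colorable_def using proper_mono by blast

lemma proper_empty: "proper I {} col"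
  unfolding proper_def by simp

lemma nb_subset: "nb I T x \<subseteq> T" unfolding nb_def by auto

lemma nb_mono: "T \<subseteq> T' \<Longrightarrow> nb I T x \<subseteq> nb I T' x" unfolding nb_def by auto

lemma ext_c:
  assumes "proper I T col" "c < 3" "c \<notin> col ` nb I T x"
  shows "proper I (insert x T) (col(x := c))"
  unfolding proper_def
proof (intro conjI ballI impI)
  fix y assume "y \<in> insert x T" then show "(col(x := c)) y < 3"
    using assms unfolding proper_def by auto
next
  fix y z assume y: "y \<in> insert x T" and z: "z \<in> insert x T" and yz: "y \<noteq> z" and e: "{y, z} \<in> I"
  show "(col(x := c)) y \<noteq> (col(x := c)) z"
  proof (cases "y = x")
    case True
    then have "z \<in> nb I T x" using z yz e unfolding nb_def by auto
    then show ?thesis using True yz assms(3) by force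
  next
    case False
    note yx = False
    show ?thesis
    proof (cases "z = x")
      case True
      then have "y \<in> nb I T x" using y yz e yx unfolding nb_def by (auto simp: insert_commute)
      then show ?thesis using True yz assms(3) by force
    next
      case False
      then show ?thesis using yx y z yz e assms(1) unfolding proper_def by auto
    qed
  qed
qed

lemma choose_c:
  assumes "finite K" "card K \<le> 2"
  shows "\<exists>c<3. c \<notin> (K::nat set)"
proof (rule ccontr)
  assume "\<not> ?thesis"
  then have "{0,1,2} \<subseteq> K" by auto
  then have "card {0::nat,1,2} \<le> card K" using assms(1) by (rule card_mono[rotated])
  then show False using assms(2) by simp
qed

lemma norm_col:
  assumes "proper I T col" "u \<in> T" "w \<in> T"
  shows "\<exists>col'. proper I T col' \<and> col' u = 0 \<and> col' w = (if col u = col w then 0 else 1)"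
proof -
  have cu: "col u < 3" and cw: "col w < 3" using assms unfolding proper_def by auto
  define q where "q = (if col u \<noteq> col w then col w else (if col u = 0 then 1 else 0))"
  define f where "f = (\<lambda>c::nat. if c = col u then 0 else if c = q then 1 else (2::nat))"
  have q: "q \<noteq> col u" "q < 3" unfolding q_def using cw by auto
  have finj: "\<And>c1 c2. c1 < 3 \<Longrightarrow> c2 < 3 \<Longrightarrow> c1 \<noteq> c2 \<Longrightarrow> f c1 \<noteq> f c2"
    unfolding f_def using q cu by auto
  have "proper I T (f \<circ> col)"
    using assms(1) finj unfolding proper_def by (auto simp: f_def)
  moreover have "(f \<circ> col) u = 0" by (simp add: f_def)
  moreover have "(f \<circ> col) w = (if col u = col w then 0 else 1)"
    by (auto simp: f_def q_def)
  ultimately show ?thesis by blast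
qed

lemma card_nb_le_ideg:
  assumes "finite I"
  shows "card (nb I T x) \<le> ideg I x"
  unfolding ideg_def
proof (rule card_inj_on_le[of "\<lambda>y. {x,y}"])
  show "inj_on (\<lambda>y. {x, y}) (nb I T x)"
    by (auto simp: inj_on_def nb_def doubleton_eq_iff)
  show "(\<lambda>y. {x, y}) ` nb I T x \<subseteq> {e \<in> I. x \<in> e}" by (auto simp: nb_def)
  show "finite {e \<in> I. x \<in> e}" using assms by simp
qed

lemma min_induct:
  assumes "finite V"
    and step: "\<And>W. W \<subseteq> V \<Longrightarrow> (\<And>W'. W' \<subset> W \<Longrightarrow> colorable I W') \<Longrightarrow> colorable I W"
  shows "colorable I V"
proof -
  have "W \<subseteq> V \<longrightarrow> colorable I W" if "finite W" for W
    using that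
  proof (induction W rule: finite_psubset_induct)
    case (psubset A)
    show ?case
    proof
      assume AV: "A \<subseteq> V"
      show "colorable I A"
      proof (rule step[OF AV])
        fix W' assume "W' \<subset> A"
        then show "colorable I W'" using psubset.IH AV by blast
      qed
    qed
  qed
  then show ?thesis using assms(1) by blast
qed

lemma ext_deg:
  assumes "finite W" "x \<in> W" "colorable I (W - {x})" "card (nb I W x) \<le> 2"
  shows "colorable I W"
proof -
  obtain col where col: "proper I (W - {x}) col" using assms(3) unfolding colorable_def by blast
  have e: "nb I (W - {x}) x = nb I W x" unfolding nb_def by auto
  have "finite (col ` nb I W x)" using assms(1) nb_subset[of I W x] by (meson finite_imageI finite_subset)
  moreover have "card (col ` nb I W x) \<le> 2"
    using assms(4) card_image_le[of "nb I W x" col] assms(1) nb_subset[of I W x]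
    by (meson finite_subset le_trans)
  ultimately obtain c where c: "c < 3" "c \<notin> col ` nb I W x" using choose_c by blast
  have "proper I (insert x (W - {x})) (col(x := c))"
    by (rule ext_c[OF col c(1)]) (use c(2) e in simp)
  moreover have "insert x (W - {x}) = W" using assms(2) by blast
  ultimately show ?thesis unfolding colorable_def by metis
qed

lemma deg_ge3:
  assumes "finite W" "\<And>W'. W' \<subset> W \<Longrightarrow> colorable I W'" "\<not> colorable I W" "x \<in> W"
  shows "3 \<le> card (nb I W x)"
proof (rule ccontr)
  assume "\<not> 3 \<le> card (nb I W x)"
  then have "card (nb I W x) \<le> 2" by simp
  moreover have "colorable I (W - {x})" using assms(2,4) by blast
  ultimately show False using ext_deg[OF assms(1,4)] assms(3) by blast
qed

lemma greedy:
  assumes "finite U" "finite P" "U \<inter> P = {}" "proper I P col" "r \<in> U"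
    and "\<forall>x\<in>U. x \<noteq> r \<longrightarrow> (\<exists>y\<in>U. y \<noteq> x \<and> {x,y} \<in> I \<and> d y < (d x::nat))"
    and "\<forall>x\<in>U. card (nb I (U \<union> P) x) \<le> 3"
    and "card (nb I (U \<union> P) r) \<le> 2 \<or>
         (\<exists>u w. u \<in> P \<and> w \<in> P \<and> u \<noteq> w \<and> u \<in> nb I (U \<union> P) r \<and> w \<in> nb I (U \<union> P) r \<and> col u = col w)"
  shows "\<exists>col'. proper I (U \<union> P) col' \<and> (\<forall>x\<in>P. col' x = col x)"
  using assms
proof (induction "card U" arbitrary: U P col rule: less_induct)
  case less
  show ?case
  proof (cases "U = {r}")
    case True
    have nbe: "nb I (U \<union> P) r = nb I P r" using True unfolding nb_def by auto
    have finN: "finite (nb I (U \<union> P) r)"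
      using less.prems(1,2) nb_subset[of I "U \<union> P" r] by (meson finite_UnI finite_subset)
    have "card (col ` nb I P r) \<le> 2"
      using less.prems(8)
    proof
      assume "card (nb I (U \<union> P) r) \<le> 2"
      then show ?thesis using card_image_le[OF finN, of col] nbe by simp
    next
      assume "\<exists>u w. u \<in> P \<and> w \<in> P \<and> u \<noteq> w \<and> u \<in> nb I (U \<union> P) r \<and> w \<in> nb I (U \<union> P) r \<and> col u = col w"
      then obtain u w where uw: "u \<noteq> w" "u \<in> nb I (U \<union> P) r" "w \<in> nb I (U \<union> P) r" "col u = col w"
        by blast
      have "col ` nb I P r = col ` (nb I P r - {u})"
        using uw nbe by (auto simp: image_iff)
      also have "card \<dots> \<le> card (nb I P r - {u})"
        using finN nbe by (simp add: card_image_le)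
      also have "\<dots> \<le> 2"
      proof -
        have "card (nb I P r) \<le> 3" using less.prems(7) less.prems(5) nbe by auto
        moreover have "card (nb I P r - {u}) = card (nb I P r) - 1"
          using uw(2) finN nbe by (simp add: card_Diff_singleton)
        ultimately show ?thesis by linarith
      qed
      finally show ?thesis .
    qed
    moreover have "finite (col ` nb I P r)" using finN nbe by simp
    ultimately obtain c where c: "c < 3" "c \<notin> col ` nb I P r" using choose_c by blast
    have "proper I (insert r P) (col(r := c))" by (rule ext_c[OF less.prems(4) c])
    moreover have "insert r P = U \<union> P" using True by blast
    moreover have "r \<notin> P" using less.prems(3,5) by blast
    ultimately show ?thesis by (metis fun_upd_other)
  next
    case False
    then have ne: "U - {r} \<noteq> {}" using less.prems(5) by blast
    have fin: "finite (d ` (U - {r}))" using less.prems(1) by simp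
    obtain x where x: "x \<in> U - {r}" "d x = Max (d ` (U - {r}))"
    proof -
      have "Max (d ` (U - {r})) \<in> d ` (U - {r})" using Max_in[OF fin] ne by blast
      then obtain x where "x \<in> U - {r}" "d x = Max (d ` (U - {r}))" by (metis imageE)
      then show ?thesis using that by blast
    qed
    have xmax: "\<And>z. z \<in> U - {r} \<Longrightarrow> d z \<le> d x"
      using x(2) fin by simp
    obtain y where y: "y \<in> U" "y \<noteq> x" "{x,y} \<in> I" "d y < d x"
      using less.prems(6) x(1) by blast
    have finN: "finite (nb I (U \<union> P) x)"
      using less.prems(1,2) nb_subset[of I "U \<union> P" x] by (meson finite_UnI finite_subset)
    have sub: "nb I P x \<subseteq> nb I (U \<union> P) x - {y}"
      unfolding nb_def using y less.prems(3) by auto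
    have yin: "y \<in> nb I (U \<union> P) x" unfolding nb_def using y by auto
    have "card (nb I P x) \<le> card (nb I (U \<union> P) x - {y})"
      using sub finN by (intro card_mono) auto
    also have "\<dots> \<le> 2"
    proof -
      have "card (nb I (U \<union> P) x) \<le> 3" using less.prems(7) x(1) by auto
      moreover have "card (nb I (U \<union> P) x - {y}) = card (nb I (U \<union> P) x) - 1"
        using yin finN by (simp add: card_Diff_singleton)
      ultimately show ?thesis by linarith
    qed
    finally have cP: "card (nb I P x) \<le> 2" .
    have finP: "finite (nb I P x)" using finN sub finite_subset by blast
    have "card (col ` nb I P x) \<le> 2" using card_image_le[OF finP, of col] cP by simp
    then obtain c where c: "c < 3" "c \<notin> col ` nb I P x" using choose_c finP by blast
    define col1 where "col1 = col(x := c)"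
    have p1: "proper I (insert x P) col1" unfolding col1_def by (rule ext_c[OF less.prems(4) c])
    have xP: "x \<notin> P" using x(1) less.prems(3) by blast
    have UP: "(U - {x}) \<union> insert x P = U \<union> P" using x(1) by blast
    have lt: "card (U - {x}) < card U" using x(1) less.prems(1) by (meson DiffD1 card_Diff1_less)
    have "\<exists>col'. proper I ((U - {x}) \<union> insert x P) col' \<and> (\<forall>z\<in>insert x P. col' z = col1 z)"
    proof (rule less.hyps[OF lt])
      show "finite (U - {x})" using less.prems(1) by simp
      show "finite (insert x P)" using less.prems(2) by simp
      show "(U - {x}) \<inter> insert x P = {}" using less.prems(3) by blast
      show "proper I (insert x P) col1" by (rule p1)
      show "r \<in> U - {x}" using x(1) less.prems(5) by blast
      show "\<forall>z\<in>U - {x}. z \<noteq> r \<longrightarrow> (\<exists>y\<in>U - {x}. y \<noteq> z \<and> {z, y} \<in> I \<and> d y < d z)"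
      proof (intro ballI impI)
        fix z assume z: "z \<in> U - {x}" "z \<noteq> r"
        then obtain y' where y': "y' \<in> U" "y' \<noteq> z" "{z,y'} \<in> I" "d y' < d z"
          using less.prems(6) by blast
        have "d z \<le> d x" using xmax z by blast
        then have "y' \<noteq> x" using y'(4) by auto
        then show "\<exists>y\<in>U - {x}. y \<noteq> z \<and> {z, y} \<in> I \<and> d y < d z" using y' by blast
      qed
      show "\<forall>z\<in>U - {x}. card (nb I ((U - {x}) \<union> insert x P) z) \<le> 3"
        using less.prems(7) UP by simp
      show "card (nb I ((U - {x}) \<union> insert x P) r) \<le> 2 \<or>
         (\<exists>u w. u \<in> insert x P \<and> w \<in> insert x P \<and> u \<noteq> w \<and> u \<in> nb I ((U - {x}) \<union> insert x P) r \<and>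
            w \<in> nb I ((U - {x}) \<union> insert x P) r \<and> col1 u = col1 w)"
        using less.prems(8) unfolding UP col1_def using xP by (metis fun_upd_other insertI2)
    qed
    then obtain col' where "proper I (U \<union> P) col'" "\<forall>z\<in>insert x P. col' z = col1 z"
      using UP by auto
    then show ?thesis using xP unfolding col1_def by auto
  qed
qed

lemma reach_dist:
  fixes S :: "nat set" and v :: nat and I :: "nat set set"
  defines "E \<equiv> {(x,y). x \<in> S \<and> y \<in> S \<and> {x,y} \<in> I}"
  defines "D \<equiv> {x. (x,v) \<in> E\<^sup>*}"
  assumes loop: "\<forall>x. {x} \<notin> I"
  shows "\<exists>d::nat\<Rightarrow>nat. \<forall>x\<in>D. x \<noteq> v \<longrightarrow> (\<exists>y\<in>D. y \<noteq> x \<and> {x,y} \<in> I \<and> d y < d x)"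
proof -
  define d where "d x = (LEAST k. (x,v) \<in> E ^^ k)" for x
  have "\<forall>x\<in>D. x \<noteq> v \<longrightarrow> (\<exists>y\<in>D. y \<noteq> x \<and> {x,y} \<in> I \<and> d y < d x)"
  proof (intro ballI impI)
    fix x assume xD: "x \<in> D" and xv: "x \<noteq> v"
    then obtain k where "(x,v) \<in> E ^^ k" unfolding D_def by (metis mem_Collect_eq rtrancl_power)
    then have dx: "(x,v) \<in> E ^^ d x" unfolding d_def by (rule LeastI)
    have "d x \<noteq> 0" using dx xv by (metis pair_in_Id_conv relpow.simps(1))
    then obtain m where m: "d x = Suc m" using not0_implies_Suc by blast
    then obtain y where y: "(x,y) \<in> E" "(y,v) \<in> E ^^ m" using dx relpow_Suc_D2 by metis
    have "y \<in> D" unfolding D_def using y(2) relpow_imp_rtrancl by blast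
    moreover have "{x,y} \<in> I" using y(1) unfolding E_def by blast
    moreover then have "y \<noteq> x" using loop by (metis insert_absorb2)
    moreover have "d y \<le> m" unfolding d_def using y(2) by (rule Least_le)
    ultimately show "\<exists>y\<in>D. y \<noteq> x \<and> {x,y} \<in> I \<and> d y < d x" using m by force
  qed
  then show ?thesis by blast
qed

lemma reach_sub:
  fixes S :: "nat set" and v :: nat and I :: "nat set set"
  defines "E \<equiv> {(x,y). x \<in> S \<and> y \<in> S \<and> {x,y} \<in> I}"
  assumes "v \<in> S" "(x,v) \<in> E\<^sup>*"
  shows "x \<in> S"
  using assms(3)
proof (cases rule: converse_rtranclE)
  case base then show ?thesis using assms(2) by simp
next
  case (step y) then show ?thesis unfolding E_def by blast
qed

lemma reach_closed:
  fixes S :: "nat set" and v :: nat and I :: "nat set set"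
  defines "E \<equiv> {(x,y). x \<in> S \<and> y \<in> S \<and> {x,y} \<in> I}"
  assumes "x \<in> S" "y \<in> S" "{x,y} \<in> I" "(y,v) \<in> E\<^sup>*"
  shows "(x,v) \<in> E\<^sup>*"
proof -
  have "(x,y) \<in> E" unfolding E_def using assms by blast
  then show ?thesis using assms(5) by (rule converse_rtrancl_into_rtrancl)
qed

lemma glue:
  assumes "proper I (A \<union> C) ca" "proper I (B \<union> C) cb" "\<forall>x\<in>C. ca x = cb x"
    "A \<inter> B = {}" "\<forall>x\<in>A. \<forall>y\<in>B. {x,y} \<notin> I"
  shows "proper I (A \<union> B \<union> C) (\<lambda>x. if x \<in> B then cb x else ca x)"
  unfolding proper_def
proof (intro conjI ballI impI)
  fix x assume "x \<in> A \<union> B \<union> C"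
  then show "(if x \<in> B then cb x else ca x) < 3" using assms(1,2) unfolding proper_def by auto
next
  fix x y assume x: "x \<in> A \<union> B \<union> C" and y: "y \<in> A \<union> B \<union> C" and xy: "x \<noteq> y" and e: "{x,y} \<in> I"
  have pa: "\<And>x y. x \<in> A \<union> C \<Longrightarrow> y \<in> A \<union> C \<Longrightarrow> x \<noteq> y \<Longrightarrow> {x,y} \<in> I \<Longrightarrow> ca x \<noteq> ca y"
    using assms(1) unfolding proper_def by blast
  have pb: "\<And>x y. x \<in> B \<union> C \<Longrightarrow> y \<in> B \<union> C \<Longrightarrow> x \<noteq> y \<Longrightarrow> {x,y} \<in> I \<Longrightarrow> cb x \<noteq> cb y"
    using assms(2) unfolding proper_def by blast
  show "(if x \<in> B then cb x else ca x) \<noteq> (if y \<in> B then cb y else ca y)"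
  proof (cases "x \<in> B")
    case xB: True
    show ?thesis
    proof (cases "y \<in> B")
      case True then show ?thesis using xB pb xy e by auto
    next
      case False
      then have "y \<in> C" using y assms(5) e xB by (auto simp: insert_commute)
      then show ?thesis using False xB pb[of x y] xy e assms(3) by auto
    qed
  next
    case xB: False
    show ?thesis
    proof (cases "y \<in> B")
      case True
      then have "x \<in> C" using x assms(5) e xB by auto
      then show ?thesis using True xB pb[of x y] xy e assms(3) by auto
    next
      case False then show ?thesis using xB pa[of x y] x y xy e by auto
    qed
  qed
qed

lemma side_diff:
  assumes fin: "finite W" and min: "\<And>W'. W' \<subset> W \<Longrightarrow> colorable I W'"
    and pq: "p \<in> W" "q \<in> W" "p \<noteq> q" "{p,q} \<notin> I" and T: "T \<subseteq> W - {p,q}"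
    and dp: "card (nb I W p \<inter> T) \<le> 1"
  shows "\<exists>col. proper I (T \<union> {p,q}) col \<and> col p \<noteq> col q"
proof -
  have "T \<union> {q} \<subset> W" using T pq by blast
  then obtain col0 where c0: "proper I (T \<union> {q}) col0" using min unfolding colorable_def by blast
  have nbe: "nb I (T \<union> {q}) p = nb I W p \<inter> T" using T pq unfolding nb_def by auto
  have finT: "finite (nb I W p \<inter> T)" using fin T finite_subset by blast
  have "card (col0 ` (nb I W p \<inter> T) \<union> {col0 q}) \<le> card (col0 ` (nb I W p \<inter> T)) + 1"
    by (simp add: card_insert_le_m1 card_Un_le)
  also have "\<dots> \<le> 2" using card_image_le[OF finT, of col0] dp by simp
  finally obtain c where c: "c < 3" "c \<notin> col0 ` (nb I W p \<inter> T) \<union> {col0 q}"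
    using choose_c finT by (metis finite_Un finite_imageI finite.emptyI finite.insertI)
  have "proper I (insert p (T \<union> {q})) (col0(p := c))"
    by (rule ext_c[OF c0 c(1)]) (use c(2) nbe in auto)
  moreover have "insert p (T \<union> {q}) = T \<union> {p,q}" by blast
  moreover have "(col0(p := c)) p \<noteq> (col0(p := c)) q" using c(2) pq(3) by auto
  ultimately show ?thesis by metis
qed

lemma side_same:
  assumes fin: "finite W" and min: "\<And>W'. W' \<subset> W \<Longrightarrow> colorable I W'"
    and pq: "p \<in> W" "q \<in> W" "p \<noteq> q" "{p,q} \<notin> I" and T: "T \<subseteq> W - {p,q}"
    and dp: "card (nb I W p \<inter> T) \<le> 1" and dq: "card (nb I W q \<inter> T) \<le> 1"
  shows "\<exists>col. proper I (T \<union> {p,q}) col \<and> col p = col q"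
proof -
  have "T \<subset> W" using T pq by blast
  then obtain col0 where c0: "proper I T col0" using min unfolding colorable_def by blast
  have finTp: "finite (nb I W p \<inter> T)" using fin T finite_subset by blast
  have finTq: "finite (nb I W q \<inter> T)" using fin T finite_subset by blast
  have "card (col0 ` (nb I W p \<inter> T) \<union> col0 ` (nb I W q \<inter> T)) \<le> card (col0 ` (nb I W p \<inter> T)) + card (col0 ` (nb I W q \<inter> T))"
    by (rule card_Un_le)
  also have "\<dots> \<le> 2" using card_image_le[OF finTp, of col0] card_image_le[OF finTq, of col0] dp dq by simp
  finally obtain c where c: "c < 3" "c \<notin> col0 ` (nb I W p \<inter> T) \<union> col0 ` (nb I W q \<inter> T)"
    using choose_c finTp finTq by (metis finite_Un finite_imageI)
  have nbp: "nb I T p = nb I W p \<inter> T" using T pq unfolding nb_def by auto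
  have p1: "proper I (insert p T) (col0(p := c))"
    by (rule ext_c[OF c0 c(1)]) (use c(2) nbp in auto)
  have nbq: "nb I (insert p T) q = nb I W q \<inter> T" using T pq unfolding nb_def by (auto simp: insert_commute)
  have pT: "p \<notin> T" using T by blast
  have "c \<notin> (col0(p := c)) ` nb I (insert p T) q" using c(2) nbq pT by auto
  then have "proper I (insert q (insert p T)) ((col0(p := c))(q := c))"
    by (rule ext_c[OF p1 c(1)])
  moreover have "insert q (insert p T) = T \<union> {p,q}" by blast
  moreover have "((col0(p := c))(q := c)) p = ((col0(p := c))(q := c)) q" using pq(3) by simp
  ultimately show ?thesis by metis
qed

lemma cycle_exists:
  assumes fin: "finite T" and Tn: "T \<subseteq> {0..<n}" and ne: "T \<noteq> {}"
    and deg: "\<forall>x\<in>T. 2 \<le> card (nb I T x)"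
  shows "\<exists>G. icycle n I G \<and> set G \<subseteq> T"
proof -
  define pth where "pth p \<longleftrightarrow> p \<noteq> [] \<and> distinct p \<and> set p \<subseteq> T \<and>
      (\<forall>i. Suc i < length p \<longrightarrow> {p!i, p!Suc i} \<in> I)" for p
  have main: "\<forall>p. card T - length p = k \<longrightarrow> pth p \<longrightarrow> (\<exists>G. icycle n I G \<and> set G \<subseteq> T)" for k
  proof (induction k rule: less_induct)
    case (less k)
    show ?case
    proof (intro allI impI)
      fix p assume k: "card T - length p = k" and pp: "pth p"
      define z where "z = p ! 0"
      have pne: "p \<noteq> []" and pd: "distinct p" and pT: "set p \<subseteq> T"
        and pe: "\<And>i. Suc i < length p \<Longrightarrow> {p!i, p!Suc i} \<in> I" using pp unfolding pth_def by auto
      have zT: "z \<in> set p" unfolding z_def using pne by simp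
      show "\<exists>G. icycle n I G \<and> set G \<subseteq> T"
      proof (cases "\<exists>y\<in>nb I T z. y \<notin> set p")
        case True
        then obtain y where y: "y \<in> nb I T z" "y \<notin> set p" by blast
        have yT: "y \<in> T" "{z,y} \<in> I" using y(1) unfolding nb_def by auto
        have pth2: "pth (y # p)" unfolding pth_def
        proof (intro conjI allI impI)
          show "y # p \<noteq> []" by simp
          show "distinct (y # p)" using pd y(2) by simp
          show "set (y # p) \<subseteq> T" using pT yT by simp
          fix i assume i: "Suc i < length (y # p)"
          show "{(y # p) ! i, (y # p) ! Suc i} \<in> I"
          proof (cases i)
            case 0
            have "{y, z} \<in> I" using yT(2) by (metis insert_commute)
            then show ?thesis using 0 z_def by simp
          next
            case (Suc j) then show ?thesis using pe[of j] i by simp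
          qed
        qed
        have "length (y # p) \<le> card T"
        proof -
          have "length (y # p) = card (set (y # p))" using pd y(2) by (simp add: distinct_card)
          also have "\<dots> \<le> card T" using pT yT fin by (intro card_mono) auto
          finally show ?thesis .
        qed
        then have lt: "card T - length (y # p) < k" using k by simp
        have "\<forall>p'. card T - length p' = card T - length (y # p) \<longrightarrow> pth p' \<longrightarrow> (\<exists>G. icycle n I G \<and> set G \<subseteq> T)"
          by (rule less.IH[OF lt])
        from this[rule_format, OF refl pth2] show ?thesis .
      next
        case False
        have finN: "finite (nb I T z)" by (rule finite_subset[OF nb_subset fin])
        obtain y where y: "y \<in> nb I T z" "length p > 1 \<longrightarrow> y \<noteq> p ! 1"
        proof -
          have "\<exists>y\<in>nb I T z. length p > 1 \<longrightarrow> y \<noteq> p ! 1"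
          proof (rule ccontr)
            assume "\<not> ?thesis"
            then have "nb I T z \<subseteq> {p ! 1}" by auto
            then have "card (nb I T z) \<le> card {p ! 1}" by (intro card_mono) simp_all
            then have "card (nb I T z) \<le> 1" by simp
            moreover have "2 \<le> card (nb I T z)" using deg zT pT by blast
            ultimately show False by simp
          qed
          then show ?thesis using that by blast
        qed
        have yp: "y \<in> set p" using False y(1) by blast
        have yz: "y \<noteq> z" "{z,y} \<in> I" using y(1) unfolding nb_def by auto
        obtain m where m: "m < length p" "p ! m = y" using yp by (metis in_set_conv_nth)
        have m0: "m \<noteq> 0" using m yz z_def by (cases m) auto
        have m1: "m \<noteq> 1" using m y(2) by auto
        define G where "G = take (Suc m) p"
        have lG: "length G = Suc m" unfolding G_def using m(1) by simp
        have "icycle n I G" unfolding icycle_def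
        proof (intro conjI allI impI)
          show "distinct G" unfolding G_def using pd by simp
          show "3 \<le> length G" using lG m0 m1 by simp
          show "set G \<subseteq> {0..<n}" unfolding G_def using pT Tn set_take_subset[of "Suc m" p] by (meson subset_trans)
          fix i assume i: "i < length G"
          show "{G ! i, G ! ((i + 1) mod length G)} \<in> I"
          proof (cases "i < m")
            case True
            then have "(i + 1) mod length G = Suc i" using lG by simp
            then show ?thesis unfolding G_def using pe[of i] True m(1) by simp
          next
            case False
            then have im: "i = m" using i lG by simp
            then have "(i + 1) mod length G = 0" using lG by simp
            have "{y, z} \<in> I" using yz(2) by (metis insert_commute)
            moreover have "G ! i = y" unfolding G_def using im m by simp
            moreover have "G ! 0 = z" unfolding G_def z_def by simp
            ultimately show ?thesis using \<open>(i + 1) mod length G = 0\<close> by simp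
          qed
        qed
        moreover have "set G \<subseteq> T" unfolding G_def using pT set_take_subset[of "Suc m" p] by (meson subset_trans)
        ultimately show ?thesis by blast
      qed
    qed
  qed
  obtain x where "x \<in> T" using ne by blast
  then have "pth [x]" unfolding pth_def by simp
  from main[of "card T - length [x]", rule_format, OF refl this] show ?thesis .
qed

lemma case2:
  assumes fI: "finite I" and Wn: "W \<subseteq> {0..<n}" and min: "\<And>W'. W' \<subset> W \<Longrightarrow> colorable I W'"
    and nc: "\<not> colorable I W" and H: "card {f. f < n \<and> ideg I f > 2} \<le> 3"
  shows False
proof -
  have fW: "finite W" using Wn finite_subset by (metis finite_atLeastLessThan)
  have WH: "W \<subseteq> {f. f < n \<and> ideg I f > 2}"
  proof
    fix x assume x: "x \<in> W"
    have "3 \<le> card (nb I W x)" by (rule deg_ge3[OF fW min nc x])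
    moreover have "card (nb I W x) \<le> ideg I x" by (rule card_nb_le_ideg[OF fI])
    ultimately show "x \<in> {f. f < n \<and> ideg I f > 2}" using x Wn by auto
  qed
  have "card W \<le> 3"
  proof -
    have "finite {f. f < n \<and> ideg I f > 2}" by simp
    then have "card W \<le> card {f. f < n \<and> ideg I f > 2}" using WH by (rule card_mono)
    then show ?thesis using H by linarith
  qed
  have "W \<noteq> {}" using nc proper_empty unfolding colorable_def by blast
  then obtain x where x: "x \<in> W" by blast
  have "nb I W x \<subseteq> W - {x}" unfolding nb_def by auto
  then have "card (nb I W x) \<le> card (W - {x})" using fW by (intro card_mono) auto
  also have "\<dots> = card W - 1" using x fW by (simp add: card_Diff_singleton)
  finally have "card (nb I W x) \<le> 2" using \<open>card W \<le> 3\<close> by linarith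
  moreover have "3 \<le> card (nb I W x)" by (rule deg_ge3[OF fW min nc x])
  ultimately show False by simp
qed

lemma case3:
  assumes Wn: "W \<subseteq> {0..<n}" and min: "\<And>W'. W' \<subset> W \<Longrightarrow> colorable I W'"
    and nc: "\<not> colorable I W"
  shows "\<exists>G. icycle n I G \<and> set G \<subseteq> W - {f}"
proof -
  have fW: "finite W" using Wn finite_subset by (metis finite_atLeastLessThan)
  have d3: "\<And>x. x \<in> W \<Longrightarrow> 3 \<le> card (nb I W x)" by (rule deg_ge3[OF fW min nc])
  have "W \<noteq> {}" using nc proper_empty unfolding colorable_def by blast
  then obtain x where x: "x \<in> W" by blast
  have ne: "W - {f} \<noteq> {}"
  proof (cases "x = f")
    case True
    have "nb I W x \<noteq> {}" using d3[OF x] by (metis card.empty not_numeral_le_zero)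
    then obtain y where "y \<in> nb I W x" by blast
    then have "y \<in> W" "y \<noteq> f" unfolding nb_def using True by auto
    then show ?thesis by blast
  next
    case False then show ?thesis using x by blast
  qed
  have deg: "\<forall>x\<in>W - {f}. 2 \<le> card (nb I (W - {f}) x)"
  proof
    fix y assume y: "y \<in> W - {f}"
    have e: "nb I (W - {f}) y = nb I W y - {f}" unfolding nb_def by auto
    have fin: "finite (nb I W y)" by (rule finite_subset[OF nb_subset fW])
    have "card (nb I W y) \<le> card (nb I W y - {f}) + 1"
    proof (cases "f \<in> nb I W y")
      case True then show ?thesis using fin by (simp add: card_Diff_singleton)
    next
      case False then show ?thesis by simp
    qed
    then show "2 \<le> card (nb I (W - {f}) y)" using d3[of y] y e by simp
  qed
  have f1: "finite (W - {f})" using fW by simp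
  have f2: "W - {f} \<subseteq> {0..<n}" using Wn by blast
  show ?thesis by (rule cycle_exists[OF f1 f2 ne deg])
qed

lemma case1:
  assumes fI: "finite I" and loop: "\<forall>x. {x} \<notin> I"
    and Wn: "W \<subseteq> {0..<n}" and min: "\<And>W'. W' \<subset> W \<Longrightarrow> colorable I W'"
    and nc: "\<not> colorable I W" and D3: "\<forall>f<n. ideg I f \<le> 3"
    and noK4: "\<not> (\<exists>Q. Q \<subseteq> {0..<n} \<and> card Q = 4 \<and> (\<forall>j\<in>Q. \<forall>k\<in>Q. j \<noteq> k \<longrightarrow> {j, k} \<in> I))"
  shows False
proof -
  have fW: "finite W" using Wn finite_subset by (metis finite_atLeastLessThan)
  have d3: "\<And>x. x \<in> W \<Longrightarrow> card (nb I W x) = 3"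
  proof -
    fix x assume x: "x \<in> W"
    have "3 \<le> card (nb I W x)" by (rule deg_ge3[OF fW min nc x])
    moreover have "card (nb I W x) \<le> ideg I x" by (rule card_nb_le_ideg[OF fI])
    moreover have "ideg I x \<le> 3" using D3 x Wn by auto
    ultimately show "card (nb I W x) = 3" by linarith
  qed
  have "W \<noteq> {}" using nc proper_empty unfolding colorable_def by blast
  then obtain v where v: "v \<in> W" by blast
  obtain a b c where abc: "nb I W v = {a,b,c}" "a \<noteq> b" "b \<noteq> c" "a \<noteq> c"
    using d3[OF v] by (metis card_3_iff)
  have inN: "\<And>y. y \<in> nb I W v \<Longrightarrow> y \<in> W \<and> y \<noteq> v \<and> {v,y} \<in> I" unfolding nb_def by auto
  obtain u w where uw: "u \<in> nb I W v" "w \<in> nb I W v" "u \<noteq> w" "{u,w} \<notin> I"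
  proof -
    have "\<not> ({a,b} \<in> I \<and> {b,c} \<in> I \<and> {a,c} \<in> I)"
    proof
      assume all: "{a,b} \<in> I \<and> {b,c} \<in> I \<and> {a,c} \<in> I"
      have va: "a \<in> W" "a \<noteq> v" "{v,a} \<in> I" using inN[of a] abc by auto
      have vb: "b \<in> W" "b \<noteq> v" "{v,b} \<in> I" using inN[of b] abc by auto
      have vc: "c \<in> W" "c \<noteq> v" "{v,c} \<in> I" using inN[of c] abc by auto
      define Q where "Q = {v,a,b,c}"
      have "Q \<subseteq> {0..<n}" unfolding Q_def using va vb vc v Wn by auto
      moreover have "card Q = 4" unfolding Q_def using va vb vc abc by auto
      moreover have "\<forall>j\<in>Q. \<forall>k\<in>Q. j \<noteq> k \<longrightarrow> {j, k} \<in> I"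
        unfolding Q_def using va(3) vb(3) vc(3) all by (auto simp: insert_commute)
      ultimately show False using noK4 by blast
    qed
    then show ?thesis using that abc by auto
  qed
  have u: "u \<in> W" "u \<noteq> v" "{v,u} \<in> I" using inN[OF uw(1)] by auto
  have w: "w \<in> W" "w \<noteq> v" "{v,w} \<in> I" using inN[OF uw(2)] by auto
  have uw': "{w,u} \<notin> I" using uw(4) by (simp add: insert_commute)
  define S where "S = W - {u,w}"
  define E where "E = {(x,y). x \<in> S \<and> y \<in> S \<and> {x,y} \<in> I}"
  define D where "D = {x. (x,v) \<in> E\<^sup>*}"
  have vS: "v \<in> S" unfolding S_def using v u w by auto
  have DS: "D \<subseteq> S" unfolding D_def E_def using reach_sub[where S=S and v=v and I=I, OF vS] by blast
  have vD: "v \<in> D" unfolding D_def by simp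
  obtain d :: "nat \<Rightarrow> nat" where dd: "\<forall>x\<in>D. x \<noteq> v \<longrightarrow> (\<exists>y\<in>D. y \<noteq> x \<and> {x,y} \<in> I \<and> d y < d x)"
    using reach_dist[where S=S and v=v and I=I, OF loop] unfolding D_def E_def by blast
  have closed: "\<And>x y. x \<in> S \<Longrightarrow> y \<in> D \<Longrightarrow> {x,y} \<in> I \<Longrightarrow> x \<in> D"
  proof -
    fix x y assume "x \<in> S" "y \<in> D" "{x,y} \<in> I"
    then show "x \<in> D" using DS reach_closed[where S=S and v=v and I=I and x=x and y=y] unfolding D_def E_def by blast
  qed
  define X where "X = S - D"
  have finS: "finite S" unfolding S_def using fW by simp
  have finD: "finite D" by (rule finite_subset[OF DS finS])
  have WS: "W = S \<union> {u,w}" unfolding S_def using u w by blast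
  show False
  proof (cases "X = {}")
    case True
    then have DeS: "D = S" unfolding X_def using DS by blast
    have pP: "proper I {u,w} (\<lambda>_. 0)" unfolding proper_def using uw(4) uw' by auto
    have "\<exists>col'. proper I (S \<union> {u,w}) col' \<and> (\<forall>x\<in>{u,w}. col' x = (\<lambda>_. 0::nat) x)"
    proof (rule greedy[OF finS _ _ pP vS])
      show "finite {u,w}" by simp
      show "S \<inter> {u,w} = {}" unfolding S_def by blast
      show "\<forall>x\<in>S. x \<noteq> v \<longrightarrow> (\<exists>y\<in>S. y \<noteq> x \<and> {x, y} \<in> I \<and> d y < d x)"
        using dd DeS by blast
      show "\<forall>x\<in>S. card (nb I (S \<union> {u, w}) x) \<le> 3"
        using d3 WS unfolding S_def by auto
      show "card (nb I (S \<union> {u, w}) v) \<le> 2 \<or>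
        (\<exists>u' w'. u' \<in> {u, w} \<and> w' \<in> {u, w} \<and> u' \<noteq> w' \<and> u' \<in> nb I (S \<union> {u, w}) v \<and>
            w' \<in> nb I (S \<union> {u, w}) v \<and> (0::nat) = 0)"
        using uw WS by auto
    qed
    then have "colorable I W" unfolding colorable_def using WS by auto
    then show False using nc by blast
  next
    case False
    have XS: "X \<subseteq> S" unfolding X_def by blast
    have DX: "D \<inter> X = {}" unfolding X_def by blast
    have SDX: "S = D \<union> X" unfolding X_def using DS by blast
    have noedge: "\<forall>x\<in>D. \<forall>y\<in>X. {x,y} \<notin> I"
    proof (intro ballI notI)
      fix x y assume x: "x \<in> D" and y: "y \<in> X" and e: "{x,y} \<in> I"
      have "{y,x} \<in> I" using e by (simp add: insert_commute)
      then have "y \<in> D" using closed[of y x] x y XS by blast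
      then show False using y unfolding X_def by blast
    qed
    have split: "card (nb I W p \<inter> D) \<le> 1 \<or> card (nb I W p \<inter> X) \<le> 1"
      if p: "p \<in> {u,w}" for p
    proof -
      have sub: "nb I W p \<subseteq> D \<union> X"
      proof
        fix y assume y: "y \<in> nb I W p"
        then have "y \<in> W" "y \<noteq> p" "{p,y} \<in> I" unfolding nb_def by auto
        moreover have "y \<noteq> u \<and> y \<noteq> w" using calculation p uw(4) uw' by auto
        ultimately show "y \<in> D \<union> X" using SDX unfolding S_def by blast
      qed
      have finN: "finite (nb I W p)" by (rule finite_subset[OF nb_subset fW])
      have "nb I W p = (nb I W p \<inter> D) \<union> (nb I W p \<inter> X)" using sub by blast
      then have "card (nb I W p) = card (nb I W p \<inter> D) + card (nb I W p \<inter> X)"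
        using finN DX by (metis card_Un_disjoint finite_Int inf_assoc inf_bot_right inf_left_commute)
      moreover have "card (nb I W p) = 3" using d3 p u w by auto
      ultimately show ?thesis by linarith
    qed
    define ach where "ach T s \<longleftrightarrow> (\<exists>col. proper I (T \<union> {u,w}) col \<and> col u = 0 \<and> col w = (if s then 0 else (1::nat)))" for T s
    have ach_of: "ach T (col u = col w)" if "proper I (T \<union> {u,w}) col" for T col
      using norm_col[OF that, of u w] unfolding ach_def by auto
    have DT: "D \<subseteq> W - {u,w}" using DS unfolding S_def by blast
    have XT: "X \<subseteq> W - {u,w}" using XS unfolding S_def by blast
    have DT': "D \<subseteq> W - {w,u}" using DT by blast
    have XT': "X \<subseteq> W - {w,u}" using XT by blast
    have anyD: "\<exists>s. ach D s"
    proof -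
      obtain x0 where x0: "x0 \<in> X" using False by blast
      have "D \<union> {u,w} \<subseteq> W" using DT u w by blast
      moreover have "x0 \<in> W" "x0 \<notin> D \<union> {u,w}" using x0 XT DX by blast+
      ultimately have "D \<union> {u,w} \<subset> W" by blast
      then have "colorable I (D \<union> {u,w})" by (rule min)
      then obtain col where "proper I (D \<union> {u,w}) col" unfolding colorable_def by blast
      from ach_of[OF this] show ?thesis by blast
    qed
    have anyX: "\<exists>s. ach X s"
    proof -
      have "X \<union> {u,w} \<subseteq> W" using XT u w by blast
      moreover have "v \<notin> X \<union> {u,w}" using vD DX u(2) w(2) by blast
      ultimately have "X \<union> {u,w} \<subset> W" using v by blast
      then have "colorable I (X \<union> {u,w})" by (rule min)
      then obtain col where "proper I (X \<union> {u,w}) col" unfolding colorable_def by blast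
      from ach_of[OF this] show ?thesis by blast
    qed
    have diff_u: "ach T False" if T: "T \<subseteq> W - {u,w}" and c: "card (nb I W u \<inter> T) \<le> 1" for T
    proof -
      obtain col where "proper I (T \<union> {u,w}) col" "col u \<noteq> col w"
        using side_diff[OF fW min u(1) w(1) uw(3) uw(4) T c] by blast
      then show ?thesis using ach_of by fastforce
    qed
    have diff_w: "ach T False" if T: "T \<subseteq> W - {u,w}" and c: "card (nb I W w \<inter> T) \<le> 1" for T
    proof -
      have T': "T \<subseteq> W - {w,u}" using T by blast
      obtain col where "proper I (T \<union> {w,u}) col" "col w \<noteq> col u"
        using side_diff[OF fW min w(1) u(1) uw(3)[symmetric] uw' T' c] by blast
      moreover have "T \<union> {w,u} = T \<union> {u,w}" by blast
      ultimately show ?thesis using ach_of by fastforce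
    qed
    have same: "ach T True" if T: "T \<subseteq> W - {u,w}" and c1: "card (nb I W u \<inter> T) \<le> 1"
      and c2: "card (nb I W w \<inter> T) \<le> 1" for T
    proof -
      obtain col where "proper I (T \<union> {u,w}) col" "col u = col w"
        using side_same[OF fW min u(1) w(1) uw(3) uw(4) T c1 c2] by blast
      then show ?thesis using ach_of by fastforce
    qed
    have gl: "colorable I W" if a1: "ach D s" and a2: "ach X s" for s
    proof -
      obtain ca where ca: "proper I (D \<union> {u,w}) ca" "ca u = 0" "ca w = (if s then 0 else 1)"
        using a1 unfolding ach_def by blast
      obtain cb where cb: "proper I (X \<union> {u,w}) cb" "cb u = 0" "cb w = (if s then 0 else 1)"
        using a2 unfolding ach_def by blast
      have "proper I (D \<union> X \<union> {u,w}) (\<lambda>x. if x \<in> X then cb x else ca x)"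
        by (rule glue[OF ca(1) cb(1) _ DX noedge]) (use ca cb in auto)
      moreover have "D \<union> X \<union> {u,w} = W" using WS SDX by blast
      ultimately show ?thesis unfolding colorable_def by metis
    qed
    have "colorable I W"
    proof -
      have su: "card (nb I W u \<inter> D) \<le> 1 \<or> card (nb I W u \<inter> X) \<le> 1" using split[of u] by simp
      have sw: "card (nb I W w \<inter> D) \<le> 1 \<or> card (nb I W w \<inter> X) \<le> 1" using split[of w] by simp
      show ?thesis
      proof (cases "card (nb I W u \<inter> D) \<le> 1")
        case uD: True
        show ?thesis
        proof (cases "card (nb I W w \<inter> D) \<le> 1")
          case True
          obtain s where "ach X s" using anyX by blast
          moreover have "ach D s" using same[OF DT uD True] diff_u[OF DT uD] by (cases s) auto
          ultimately show ?thesis using gl by blast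
        next
          case False
          then have "card (nb I W w \<inter> X) \<le> 1" using sw by simp
          then show ?thesis using gl diff_u[OF DT uD] diff_w[OF XT] by blast
        qed
      next
        case uD: False
        then have uX: "card (nb I W u \<inter> X) \<le> 1" using su by simp
        show ?thesis
        proof (cases "card (nb I W w \<inter> X) \<le> 1")
          case True
          obtain s where "ach D s" using anyD by blast
          moreover have "ach X s" using same[OF XT uX True] diff_u[OF XT uX] by (cases s) auto
          ultimately show ?thesis using gl by blast
        next
          case False
          then have "card (nb I W w \<inter> D) \<le> 1" using sw by simp
          then show ?thesis using gl diff_u[OF XT uX] diff_w[OF DT] by blast
        qed
      qed
    qed
    then show False using nc by blast
  qed
qed

lemma three_cases: "(c::nat) < 3 \<Longrightarrow> c = 0 \<or> c = 1 \<or> c = 2" by arith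

lemma rank_aux:
  fixes c d :: nat
  assumes "c < 3" "d < 3" "c \<noteq> d"
    "a * (if c \<noteq> 1 then 1 else 0) + b * (if c \<noteq> 0 then 1 else 0) = (0::bit)"
    "a * (if d \<noteq> 1 then 1 else 0) + b * (if d \<noteq> 0 then 1 else 0) = (0::bit)"
  shows "a = 0 \<and> b = 0"
  using three_cases[OF assms(1)] three_cases[OF assms(2)] assms(3-5)
  by (cases a; cases b) auto

lemma edge_aux:
  fixes c d :: nat
  assumes "c < 3" "d < 3" "c \<noteq> d"
  shows "(if c \<noteq> 1 then 1 else 0) + (if d \<noteq> 1 then 1 else 0) \<noteq> (0::bit) \<or>
         (if c \<noteq> 0 then 1 else 0) + (if d \<noteq> 0 then 1 else 0) \<noteq> (0::bit)"
  using three_cases[OF assms(1)] three_cases[OF assms(2)] assms(3) by auto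


theorem theorem5:
  fixes n :: nat and I :: "nat set set"
  assumes "n \<ge> 2"
    and "\<forall>e\<in>I. \<exists>j k. j < n \<and> k < n \<and> j \<noteq> k \<and> e = {j, k}"
    and "((\<forall>f<n. ideg I f \<le> 3) \<and>
           \<not> (\<exists>Q. Q \<subseteq> {0..<n} \<and> card Q = 4 \<and>
                (\<forall>j\<in>Q. \<forall>k\<in>Q. j \<noteq> k \<longrightarrow> {j, k} \<in> I)))
       \<or> card {f. f < n \<and> ideg I f > 2} \<le> 3
       \<or> ((\<nexists>G. icycle n I G) \<or> (\<exists>f<n. \<forall>G. icycle n I G \<longrightarrow> f \<in> set G))"
  shows "\<exists>r1 r2. rank2 n r1 r2 \<and>
           (\<forall>j<n. estimable n r1 r2 {j}) \<and>
           (\<forall>e\<in>I. estimable n r1 r2 e)"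
proof -
  have IP: "I \<subseteq> Pow {0..<n}" using assms(2) by auto
  have fI: "finite I" by (rule finite_subset[OF IP]) simp
  have loop: "\<forall>x. {x} \<notin> I"
  proof (intro allI notI)
    fix x assume "{x} \<in> I"
    then obtain j k where "j \<noteq> k" "{x} = {j,k}" using assms(2) by blast
    then show False by (metis insertI1 insert_commute singletonD)
  qed
  have "colorable I {0..<n}"
  proof (rule min_induct)
    show "finite {0..<n}" by simp
    fix W assume Wn: "W \<subseteq> {0..<n}" and min: "\<And>W'. W' \<subset> W \<Longrightarrow> colorable I W'"
    show "colorable I W"
    proof (rule ccontr)
      assume nc: "\<not> colorable I W"
      show False
        using assms(3)
      proof (elim disjE conjE)
        assume "\<forall>f<n. ideg I f \<le> 3"
          "\<not> (\<exists>Q. Q \<subseteq> {0..<n} \<and> card Q = 4 \<and> (\<forall>j\<in>Q. \<forall>k\<in>Q. j \<noteq> k \<longrightarrow> {j, k} \<in> I))"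
        then show False using case1[OF fI loop Wn min nc] by blast
      next
        assume "card {f. f < n \<and> 2 < ideg I f} \<le> 3"
        then show False using case2[OF fI Wn min nc] by blast
      next
        assume "\<nexists>G. icycle n I G"
        then show False using case3[OF Wn min nc, of 0] by blast
      next
        assume "\<exists>f<n. \<forall>G. icycle n I G \<longrightarrow> f \<in> set G"
        then obtain f where f: "\<forall>G. icycle n I G \<longrightarrow> f \<in> set G" by blast
        obtain G where "icycle n I G" "set G \<subseteq> W - {f}" using case3[OF Wn min nc, of f] by blast
        then show False using f by blast
      qed
    qed
  qed
  then obtain col0 where col0: "proper I {0..<n} col0" unfolding colorable_def by blast
  obtain col i0 j0 where col: "proper I {0..<n} col" and ij: "i0 < n" "j0 < n" "col i0 \<noteq> col j0"
  proof (cases "\<exists>i j. i < n \<and> j < n \<and> col0 i \<noteq> col0 j")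
    case True then show ?thesis using that col0 by blast
  next
    case False
    define col1 where "col1 = (\<lambda>i::nat. if i = 0 then 0 else (1::nat))"
    have pc1: "proper I {0..<n} col1"
      unfolding proper_def
    proof (intro conjI ballI impI)
      fix x assume "x \<in> {0..<n}" then show "col1 x < 3" unfolding col1_def by simp
    next
      fix x y assume "x \<in> {0..<n}" "y \<in> {0..<n}" "x \<noteq> y" "{x,y} \<in> I"
      then have "col0 x \<noteq> col0 y" using col0 unfolding proper_def by blast
      moreover have "x < n" "y < n" using \<open>x \<in> {0..<n}\<close> \<open>y \<in> {0..<n}\<close> by simp_all
      ultimately show "col1 x \<noteq> col1 y" using False by blast
    qed
    have c01: "col1 0 \<noteq> col1 1" unfolding col1_def by simp
    have n01: "0 < n" "1 < n" using assms(1) by auto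
    show ?thesis by (rule that[OF pc1 n01 c01])
  qed
  have clt: "\<And>i. i < n \<Longrightarrow> col i < 3" using col unfolding proper_def by auto
  define r1 where "r1 = (\<lambda>i. if i < n \<and> col i \<noteq> 1 then 1 else (0::bit))"
  define r2 where "r2 = (\<lambda>i. if i < n \<and> col i \<noteq> 0 then 1 else (0::bit))"
  have rk: "rank2 n r1 r2"
    unfolding rank2_def
  proof (intro conjI allI impI)
    show "r1 \<in> gfvec n" "r2 \<in> gfvec n" unfolding gfvec_def r1_def r2_def by auto
    fix a b :: bit assume h: "(\<lambda>i. a * r1 i + b * r2 i) = (\<lambda>_. 0)"
    have h1: "a * r1 i0 + b * r2 i0 = 0" and h2: "a * r1 j0 + b * r2 j0 = 0"
      using fun_cong[OF h, of i0] fun_cong[OF h, of j0] by auto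
    have c1: "col i0 < 3" "col j0 < 3" using clt ij by auto
    have "a = 0 \<and> b = 0"
      by (rule rank_aux[OF c1 ij(3)]) (use h1 h2 ij in \<open>simp add: r1_def r2_def\<close>)+
    then show "a = 0" "b = 0" by auto
  qed
  have main: "\<forall>j<n. estimable n r1 r2 {j}"
  proof (intro allI impI)
    fix j assume j: "j < n"
    have "col j < 3" using clt j by simp
    then have "r1 j \<noteq> 0 \<or> r2 j \<noteq> 0" unfolding r1_def r2_def using j by auto
    then show "estimable n r1 r2 {j}" using estimable_if[OF rk] by simp
  qed
  have edges: "\<forall>e\<in>I. estimable n r1 r2 e"
  proof
    fix e assume e: "e \<in> I"
    then obtain j k where jk: "j < n" "k < n" "j \<noteq> k" "e = {j,k}" using assms(2) by blast
    have "col j \<noteq> col k" using col jk e unfolding proper_def by auto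
    moreover have "col j < 3" "col k < 3" using clt jk by auto
    ultimately have "r1 j + r1 k \<noteq> 0 \<or> r2 j + r2 k \<noteq> 0"
      unfolding r1_def r2_def using jk edge_aux[of "col j" "col k"] by simp
    then show "estimable n r1 r2 e" using estimable_if[OF rk] jk by simp
  qed
  show ?thesis using rk main edges by blast
qed

end
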